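(* Let $r\in[0,1]^A$ and for $\tau>0$ set $f^\tau(\theta)=\pi_\theta^\top(r-\tau\log\pi_\theta)$, where $\pi_\theta=\mathrm{softmax}(\theta)$, and $f^{*_\tau}:=\max_\theta f^\tau(\theta)$ (attained at $\pi_\theta=\mathrm{softmax}(r/\tau)$). For a fixed $\theta$ and $0<\tau_2<\tau_1$, $$f^{*_{\tau_2}}-f^{\tau_2}(\theta)\le f^{*_{\tau_1}}-f^{\tau_1}(\theta)+\tau_1W\Big(\frac{A-1}{e}\Big)+\tau_1\log A,$$ where $W$ is the principal branch of the Lambert $W$ function ($W(x)e^{W(x)}=x$ for $x\ge0$).
   Context: $\log\pi$ denotes the coordinatewise logarithm. *)

theory Defs
  imports Complex_Main
begin

definition softmax :: "('a::finite \<Rightarrow> real) \<Rightarrow> 'a \<Rightarrow> real" where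
  "softmax \<theta> a = exp (\<theta> a) / (\<Sum>b\<in>UNIV. exp (\<theta> b))"

definition freg :: "('a::finite \<Rightarrow> real) \<Rightarrow> real \<Rightarrow> ('a \<Rightarrow> real) \<Rightarrow> real" where
  "freg r \<tau> \<theta> = (\<Sum>a\<in>UNIV. softmax \<theta> a * (r a - \<tau> * ln (softmax \<theta> a)))"

definition fstar :: "('a::finite \<Rightarrow> real) \<Rightarrow> real \<Rightarrow> real" where
  "fstar r \<tau> = (SUP \<theta>. freg r \<tau> \<theta>)"

definition lambertW :: "real \<Rightarrow> real" where
  "lambertW x = (THE w. 0 \<le> w \<and> w * exp w = x)"

end

theory Submission
  imports Defs
begin

lemma softmax_pos: "softmax \<theta> a > 0"
  unfolding softmax_def by (intro divide_pos_pos) (auto intro: sum_pos)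

lemma softmax_sum: "(\<Sum>a\<in>UNIV. softmax \<theta> a) = 1"
proof -
  have "(\<Sum>b\<in>UNIV. exp (\<theta> b)) > 0" by (auto intro: sum_pos)
  then show ?thesis unfolding softmax_def by (simp add: sum_divide_distrib[symmetric])
qed

lemma softmax_le1: "softmax \<theta> a \<le> 1"
proof -
  have "softmax \<theta> a \<le> (\<Sum>a\<in>UNIV. softmax \<theta> a)"
    by (rule member_le_sum) (auto simp: less_imp_le[OF softmax_pos])
  then show ?thesis by (simp add: softmax_sum)
qed

lemma freg_split: "freg r t \<theta> = (\<Sum>a\<in>UNIV. softmax \<theta> a * r a) + t * (- (\<Sum>a\<in>UNIV. softmax \<theta> a * ln (softmax \<theta> a)))"
  unfolding freg_def by (simp add: algebra_simps sum.distrib sum_subtractf sum_distrib_left)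

lemma ent_ge0: "0 \<le> - (\<Sum>a\<in>UNIV. softmax \<theta> a * ln (softmax \<theta> a))"
proof -
  have "(\<Sum>a\<in>UNIV. softmax \<theta> a * ln (softmax \<theta> a)) \<le> 0"
  proof (rule sum_nonpos)
    fix a :: 'a
    have "ln (softmax \<theta> a) \<le> 0" using softmax_pos[of \<theta> a] softmax_le1[of \<theta> a] by simp
    then show "softmax \<theta> a * ln (softmax \<theta> a) \<le> 0"
      using softmax_pos[of \<theta> a] by (simp add: mult_nonneg_nonpos)
  qed
  then show ?thesis by simp
qed

lemma ent_le: fixes \<theta> :: "'a::finite \<Rightarrow> real" shows "- (\<Sum>a\<in>UNIV. softmax \<theta> a * ln (softmax \<theta> a)) \<le> ln (real (card (UNIV::'a set)))"
proof -
  define A where "A = real (card (UNIV::'a set))"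
  have A: "A > 0" unfolding A_def by (simp add: card_gt_0_iff)
  have "\<And>a. softmax \<theta> a * ln (1 / (A * softmax \<theta> a)) \<le> softmax \<theta> a * (1 / (A * softmax \<theta> a) - 1)"
    by (intro mult_left_mono ln_le_minus_one) (use A softmax_pos[of \<theta>] in \<open>auto intro: less_imp_le\<close>)
  then have "(\<Sum>a\<in>UNIV. softmax \<theta> a * ln (1 / (A * softmax \<theta> a))) \<le> (\<Sum>a\<in>UNIV. softmax \<theta> a * (1 / (A * softmax \<theta> a) - 1))"
    by (rule sum_mono)
  also have "\<dots> = (\<Sum>a\<in>UNIV. 1 / A - softmax \<theta> a)"
    using A softmax_pos[of \<theta>] by (intro sum.cong) (auto simp: field_simps less_imp_neq[OF softmax_pos, symmetric])
  also have "\<dots> = 0" using A by (simp add: sum_subtractf softmax_sum A_def)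
  finally have 1: "(\<Sum>a\<in>UNIV. softmax \<theta> a * ln (1 / (A * softmax \<theta> a))) \<le> 0" .
  have "(\<Sum>a\<in>UNIV. softmax \<theta> a * ln (1 / (A * softmax \<theta> a))) = (\<Sum>a\<in>UNIV. - softmax \<theta> a * ln A - softmax \<theta> a * ln (softmax \<theta> a))"
    using A softmax_pos[of \<theta>] by (intro sum.cong) (auto simp: ln_div ln_mult algebra_simps less_imp_neq[OF softmax_pos, symmetric])
  also have "\<dots> = - ln A - (\<Sum>a\<in>UNIV. softmax \<theta> a * ln (softmax \<theta> a))"
    by (simp add: sum_subtractf sum_negf sum_distrib_right[symmetric] softmax_sum)
  finally show ?thesis using 1 unfolding A_def by linarith
qed

lemma freg_bdd: fixes \<theta> :: "'a::finite \<Rightarrow> real" shows "0 \<le> t \<Longrightarrow> freg r t \<theta> \<le> (\<Sum>a\<in>UNIV. \<bar>r a\<bar>) + t * ln (real (card (UNIV::'a set)))"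
proof -
  assume t: "0 \<le> t"
  have "(\<Sum>a\<in>UNIV. softmax \<theta> a * r a) \<le> (\<Sum>a\<in>UNIV. \<bar>r a\<bar>)"
  proof (rule sum_mono)
    fix a
    have "softmax \<theta> a * r a \<le> softmax \<theta> a * \<bar>r a\<bar>"
      using softmax_pos[of \<theta> a] by (intro mult_left_mono) auto
    also have "\<dots> \<le> 1 * \<bar>r a\<bar>" by (intro mult_right_mono softmax_le1) auto
    finally show "softmax \<theta> a * r a \<le> \<bar>r a\<bar>" by simp
  qed
  moreover have "t * (- (\<Sum>a\<in>UNIV. softmax \<theta> a * ln (softmax \<theta> a))) \<le> t * ln (real (card (UNIV::'a set)))"
    using t ent_le by (intro mult_left_mono) auto
  ultimately show ?thesis unfolding freg_split by linarith
qed

lemma fstar_mono: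
  assumes "0 \<le> t2" "t2 \<le> t1"
  shows "fstar r t2 \<le> fstar r t1"
  unfolding fstar_def
proof (rule cSUP_mono)
  show "bdd_above (range (freg r t1))"
    using freg_bdd[of t1 r] assms by (intro bdd_aboveI2) auto
  fix \<theta>
  have "freg r t2 \<theta> \<le> freg r t1 \<theta>"
    unfolding freg_split using assms ent_ge0[of \<theta>] by (intro add_left_mono mult_right_mono) auto
  then show "\<exists>m\<in>UNIV. freg r t2 \<theta> \<le> freg r t1 m" by blast
qed simp

lemma xexp_mono: "0 \<le> v \<Longrightarrow> v < (w::real) \<Longrightarrow> v * exp v < w * exp w"
  by (rule mult_less_le_imp_less) auto

lemma lambertW_nonneg:
  assumes x: "0 \<le> x" shows "0 \<le> lambertW x"
proof -
  have x1: "x \<le> x * exp x"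
  proof -
    have "1 \<le> exp x" using x by simp
    then have "x * 1 \<le> x * exp x" using x by (rule mult_left_mono)
    then show ?thesis by simp
  qed
  have cont: "continuous_on {0..x} (\<lambda>w::real. w * exp w)" by (intro continuous_intros)
  have "0 * exp 0 \<le> x" using x by simp
  from IVT'[of "\<lambda>w. w * exp w", OF this _ x cont] x1
  obtain w where w: "0 \<le> w" "w * exp w = x" by blast
  have uniq: "v = w" if v: "0 \<le> v" "v * exp v = x" for v
  proof (rule ccontr)
    assume "v \<noteq> w"
    then have "v < w \<or> w < v" by linarith
    then show False
    proof
      assume "v < w"
      from xexp_mono[OF v(1) this] show False using v(2) w(2) by linarith
    next
      assume "w < v"
      from xexp_mono[OF w(1) this] show False using v(2) w(2) by linarith
    qed
  qed
  have "lambertW x = w" unfolding lambertW_def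
  proof (rule the_equality)
    show "0 \<le> w \<and> w * exp w = x" using w by blast
    show "\<And>v. 0 \<le> v \<and> v * exp v = x \<Longrightarrow> v = w" using uniq by blast
  qed
  then show ?thesis using w by simp
qed

theorem lemma16:
  fixes r :: "'a::finite \<Rightarrow> real" and \<theta> :: "'a \<Rightarrow> real" and \<tau>1 \<tau>2 :: real
  assumes "\<And>a. 0 \<le> r a \<and> r a \<le> 1"
    and "0 < \<tau>2" and "\<tau>2 < \<tau>1"
  shows "fstar r \<tau>2 - freg r \<tau>2 \<theta>
     \<le> fstar r \<tau>1 - freg r \<tau>1 \<theta>
        + \<tau>1 * lambertW ((real (card (UNIV::'a set)) - 1) / exp 1) + \<tau>1 * ln (real (card (UNIV::'a set)))"
proof -
  define H where "H = - (\<Sum>a\<in>UNIV. softmax \<theta> a * ln (softmax \<theta> a))"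
  define L where "L = ln (real (card (UNIV::'a set)))"
  have m: "fstar r \<tau>2 \<le> fstar r \<tau>1" using assms by (intro fstar_mono) auto
  have d: "freg r \<tau>1 \<theta> - freg r \<tau>2 \<theta> = (\<tau>1 - \<tau>2) * H"
    unfolding freg_split H_def by (simp add: algebra_simps)
  have HL: "H \<le> L" unfolding H_def L_def by (rule ent_le)
  have L0: "0 \<le> L" unfolding L_def by (simp add: Suc_leI card_gt_0_iff)
  have "(\<tau>1 - \<tau>2) * H \<le> (\<tau>1 - \<tau>2) * L" using HL assms by (intro mult_left_mono) auto
  also have "\<dots> \<le> \<tau>1 * L" using L0 assms by (intro mult_right_mono) auto
  finally have e: "(\<tau>1 - \<tau>2) * H \<le> \<tau>1 * L" .
  have c: "real (card (UNIV::'a set)) \<ge> 1"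
    by (simp add: Suc_leI card_gt_0_iff)
  have "0 \<le> lambertW ((real (card (UNIV::'a set)) - 1) / exp 1)"
    using c by (intro lambertW_nonneg) auto
  then have "0 \<le> \<tau>1 * lambertW ((real (card (UNIV::'a set)) - 1) / exp 1)"
    using assms by simp
  then show ?thesis using m d e unfolding L_def by linarith
qed

end
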